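(* Let $\Omega$ be a bounded domain in $\mathbb{H}^{n+1}$ and let $\phi$ be a smooth, positive, even function on $\mathbb{R}$ with $(\log\phi)''\ge0$. Then $$\int_\Omega\phi'(\lambda)\lambda'\lambda\,dv\ge\eta\Big(\int_\Omega\phi(\lambda)\lambda'\,dv\Big),$$ where $\eta$ is determined by $$\eta\Big(\omega_n\int_0^t\phi(s)s^n\,ds\Big)=\omega_n\int_0^t\phi'(s)s^{n+1}\,ds\qquad\forall\,t\ge0.$$ If $\phi(\lambda(r))$ is not constant on $\Omega$, then equality holds if and only if $\Omega$ is a geodesic ball centered at the origin.
   Context: A fixed point of $\mathbb{H}^{n+1}$ is the origin; $r$ is the geodesic distance to it, $\lambda=\sinh r$, $\lambda'=\cosh r$. $dv$ is the hyperbolic volume element and $\omega_n$ the area of the unit sphere $\mathbb{S}^n$. *)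

theory Defs
  imports "HOL-Analysis.Analysis"
begin

text \<open>Model of hyperbolic space H^(n+1): the Poincare ball model on the open unit
  ball of a Euclidean space 'a with DIM('a) = n+1; the origin is 0.\<close>

definition poincare_ball :: "'a::euclidean_space set" where
  "poincare_ball = ball 0 1"

definition hdist0 :: "'a::euclidean_space \<Rightarrow> real" where
  "hdist0 x = ln ((1 + norm x) / (1 - norm x))"

definition hlam :: "'a::euclidean_space \<Rightarrow> real" where
  "hlam x = sinh (hdist0 x)"

definition hlam' :: "'a::euclidean_space \<Rightarrow> real" where
  "hlam' x = cosh (hdist0 x)"

text \<open>Density of the hyperbolic volume element dv with respect to Lebesgue measure.\<close>
definition hdens :: "'a::euclidean_space \<Rightarrow> real" where
  "hdens x = (2 / (1 - (norm x)\<^sup>2)) ^ DIM('a)"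

definition hyp_integral :: "'a::euclidean_space set \<Rightarrow> ('a \<Rightarrow> real) \<Rightarrow> real" where
  "hyp_integral \<Omega> f = (LINT x:\<Omega>|lborel. f x * hdens x)"

text \<open>Bounded domain: nonempty, open, connected, regular open (a minimal boundary
  regularity, implied by a C^1 boundary), and bounded in the hyperbolic metric.\<close>
definition hyp_bounded_domain :: "'a::euclidean_space set \<Rightarrow> bool" where
  "hyp_bounded_domain \<Omega> \<longleftrightarrow> \<Omega> \<noteq> {} \<and> open \<Omega> \<and> connected \<Omega> \<and>
     interior (closure \<Omega>) = \<Omega> \<and>
     \<Omega> \<subseteq> poincare_ball \<and> (\<exists>R. \<forall>x\<in>\<Omega>. hdist0 x \<le> R)"

definition hyp_ball0 :: "real \<Rightarrow> 'a::euclidean_space set" where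
  "hyp_ball0 \<rho> = {x \<in> poincare_ball. hdist0 x < \<rho>}"

text \<open>Area of the unit sphere S^n in R^(n+1).\<close>
definition sphere_area :: "nat \<Rightarrow> real" where
  "sphere_area n = 2 * pi powr ((real n + 1) / 2) / Gamma ((real n + 1) / 2)"

definition smooth_fun :: "(real \<Rightarrow> real) \<Rightarrow> bool" where
  "smooth_fun f \<longleftrightarrow> (\<forall>k x. ((deriv ^^ k) f) differentiable (at x))"

end

theory Submission
  imports Defs
begin


lemma cont_radial:
  fixes h :: "real \<Rightarrow> real"
  assumes hc: "continuous_on {0..<1} h" and b: "b < 1"
  shows "continuous_on (cball (0::'a::euclidean_space) b) (\<lambda>x. h (norm x))"
  by (rule continuous_on_compose2[OF hc continuous_on_norm_id]) (use b in auto)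

lemma radial_set_integrable:
  fixes h :: "real \<Rightarrow> real"
  assumes hc: "continuous_on {0..<1} h" and b: "b < 1" and S: "S \<in> sets lborel" "S \<subseteq> cball 0 b"
  shows "set_integrable lborel S (\<lambda>x::'a::euclidean_space. h (norm x))"
proof -
  have "integrable lborel (\<lambda>x::'a. indicator (cball 0 b) x *\<^sub>R h (norm x))"
    by (rule borel_integrable_compact) (auto intro: cont_radial[OF hc b])
  hence "set_integrable lborel (cball 0 b) (\<lambda>x::'a. h (norm x))"
    by (simp add: set_integrable_def)
  thus ?thesis using S set_integrable_subset by blast
qed

lemma ann_bound:
  fixes h :: "real \<Rightarrow> real"
  assumes hc: "continuous_on {0..<1} h" and ab: "0 \<le> a" "a \<le> b" "b < 1"
    and eps: "\<And>u. a \<le> u \<Longrightarrow> u \<le> b \<Longrightarrow> \<bar>h u - c\<bar> \<le> e"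
  shows "\<bar>(LINT x:ball (0::'a::euclidean_space) b|lborel. h (norm x)) - (LINT x:ball (0::'a) a|lborel. h (norm x))
          - c * (measure lborel (ball (0::'a) b) - measure lborel (ball (0::'a) a))\<bar>
         \<le> e * (measure lborel (ball (0::'a) b) - measure lborel (ball (0::'a) a))"
proof -
  define S where "S = ball (0::'a) b - ball 0 a"
  have Ssets: "S \<in> sets lborel" unfolding S_def by auto
  have iS: "set_integrable lborel S (\<lambda>x::'a. h (norm x))"
    by (rule radial_set_integrable[OF hc ab(3) Ssets]) (auto simp: S_def)
  have ia: "set_integrable lborel (ball 0 a) (\<lambda>x::'a. h (norm x))"
    by (rule radial_set_integrable[OF hc ab(3)]) (use ab in auto)
  have un: "ball (0::'a) b = ball 0 a \<union> S" "ball 0 a \<inter> S = {}" using ab by (auto simp: S_def)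
  have spl: "(LINT x:ball (0::'a) b|lborel. h (norm x)) = (LINT x:ball (0::'a) a|lborel. h (norm x)) + (LINT x:S|lborel. h (norm x))"
    using set_integral_Un[OF un(2) ia iS] un(1) by simp
  have mS: "measure lborel S = measure lborel (ball (0::'a) b) - measure lborel (ball (0::'a) a)"
    unfolding S_def using ab by (subst measure_Diff) (auto simp: emeasure_ball)
  have fin: "emeasure lborel S \<noteq> \<infinity>"
    using emeasure_mono[of S "ball (0::'a) b" lborel] emeasure_ball[of b "0::'a"] ab by (auto simp: S_def top_unique)
  have cS: "(LINT x:S|lborel. c) = c * measure lborel S"
    using set_integral_const[OF Ssets fin, of c] by simp
  have icS: "set_integrable lborel S (\<lambda>x::'a. c)"
    using fin Ssets by (simp add: set_integrable_def emeasure_ball less_top)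
  have d: "(LINT x:S|lborel. h (norm x)) - c * measure lborel S = (LINT x:S|lborel. h (norm x) - c)"
    using set_integral_diff(2)[OF iS icS] cS by simp
  have "\<bar>LINT x:S|lborel. h (norm x) - c\<bar> \<le> (LINT x:S|lborel. \<bar>h (norm x) - c\<bar>)"
    using set_integral_norm_bound[OF set_integral_diff(1)[OF iS icS]] by simp
  also have "\<dots> \<le> (LINT x:S|lborel. e)"
  proof (rule set_integral_mono)
    show "set_integrable lborel S (\<lambda>x. \<bar>h (norm x) - c\<bar>)"
      using set_integrable_abs[OF set_integral_diff(1)[OF iS icS]] by simp
    show "set_integrable lborel S (\<lambda>x::'a. e)"
      using fin Ssets by (simp add: set_integrable_def emeasure_ball less_top)
    fix x assume "x \<in> S" thus "\<bar>h (norm x) - c\<bar> \<le> e" by (intro eps) (auto simp: S_def)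
  qed
  also have "\<dots> = e * measure lborel S" using set_integral_const[OF Ssets fin, of e] by simp
  finally show ?thesis using d spl by (auto simp: mS algebra_simps)
qed

lemma radial_deriv:
  fixes h :: "real \<Rightarrow> real" and r :: real
  assumes hc: "continuous_on {0..<1} h" and r: "0 \<le> r" "r < 1"
  shows "((\<lambda>s. LINT x:ball (0::'a::euclidean_space) s|lborel. h (norm x)) has_real_derivative
           h r * (unit_ball_vol DIM('a) * (DIM('a) * r ^ (DIM('a) - 1)))) (at r within {0..<1})"
proof -
  define m where "m = DIM('a)"
  define V where "V = unit_ball_vol DIM('a)"
  define A where "A = (\<lambda>s. LINT x:ball (0::'a) s|lborel. h (norm x))"
  define D where "D = V * (m * r ^ (m-1))"
  have vd: "((\<lambda>s::real. V * s ^ m) has_real_derivative D) (at r within {0..<1})"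
    unfolding D_def by (auto intro!: derivative_eq_intros)
  hence q: "((\<lambda>s::real. (V * s ^ m - V * r ^ m)/(s - r)) \<longlongrightarrow> D) (at r within {0..<1})"
    by (simp add: has_field_derivative_iff)
  have vol: "measure lborel (ball (0::'a) s) = V * s^m" if "0 \<le> s" for s
    using content_ball[OF that, of "0::'a"] by (simp add: V_def m_def)
  define E where "E = (\<lambda>s. A s - A r - h r * (V * s ^ m - V * r ^ m))"
  have Ebound: "\<bar>E s\<bar> \<le> e * \<bar>V * s ^ m - V * r ^ m\<bar>"
    if s: "0 \<le> s" "s < 1" and he: "\<And>u. min r s \<le> u \<Longrightarrow> u \<le> max r s \<Longrightarrow> \<bar>h u - h r\<bar> \<le> e" for s e
  proof (cases "s \<le> r")
    case True
    have "\<bar>A r - A s - h r * (measure lborel (ball (0::'a) r) - measure lborel (ball (0::'a) s))\<bar>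
         \<le> e * (measure lborel (ball (0::'a) r) - measure lborel (ball (0::'a) s))"
      unfolding A_def by (rule ann_bound[OF hc s(1) True r(2)]) (use he True in auto)
    moreover have "V * s ^ m \<le> V * r ^ m" using True s
      by (intro mult_left_mono power_mono) (auto simp: V_def)
    ultimately show ?thesis using s r by (simp add: vol E_def abs_minus_commute[of "V * s ^ m"] algebra_simps)
  next
    case False
    have "\<bar>A s - A r - h r * (measure lborel (ball (0::'a) s) - measure lborel (ball (0::'a) r))\<bar>
         \<le> e * (measure lborel (ball (0::'a) s) - measure lborel (ball (0::'a) r))"
      unfolding A_def by (rule ann_bound[OF hc r(1) _ s(2)]) (use he False in auto)
    moreover have "V * r ^ m \<le> V * s ^ m" using False r
      by (intro mult_left_mono power_mono) (auto simp: V_def)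
    ultimately show ?thesis using s r by (simp add: vol E_def algebra_simps)
  qed
  have E0: "((\<lambda>s. E s/(s-r)) \<longlongrightarrow> 0) (at r within {0..<1})"
  proof (rule tendstoI)
    fix e::real assume e: "e > 0"
    define K where "K = \<bar>D\<bar> + 1"
    have K: "K > 0" by (simp add: K_def add_pos_nonneg)
    have ev1: "eventually (\<lambda>s. dist ((V * s ^ m - V * r ^ m)/(s - r)) D < 1) (at r within {0..<1})"
      using tendstoD[OF q, of 1] by simp
    obtain d where d: "d > 0" "\<And>u. u \<in> {0..<1} \<Longrightarrow> dist u r < d \<Longrightarrow> dist (h u) (h r) < e/K"
      using hc r K e unfolding continuous_on_iff by (metis atLeastLessThan_iff divide_pos_pos)
    have ev2: "eventually (\<lambda>s. s \<in> {0..<1} \<and> s \<noteq> r \<and> dist s r < d) (at r within {0..<1})"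
      unfolding eventually_at using d(1) by (auto intro!: exI[of _ d])
    show "eventually (\<lambda>s. dist (E s/(s-r)) 0 < e) (at r within {0..<1})"
      using ev1 ev2
    proof eventually_elim
      case (elim s)
      have "\<bar>E s\<bar> \<le> e/K * \<bar>V * s ^ m - V * r ^ m\<bar>"
      proof (rule Ebound)
        fix u assume "min r s \<le> u" "u \<le> max r s"
        hence "u \<in> {0..<1}" "dist u r < d" using elim r by (auto simp: dist_real_def)
        thus "\<bar>h u - h r\<bar> \<le> e/K" using d(2) by (force simp: dist_real_def)
      qed (use elim in auto)
      hence "\<bar>E s\<bar>/\<bar>s-r\<bar> \<le> (e/K * \<bar>V * s ^ m - V * r ^ m\<bar>)/\<bar>s-r\<bar>"
        by (rule divide_right_mono) simp
      hence "\<bar>E s/(s-r)\<bar> \<le> e/K * \<bar>(V * s ^ m - V * r ^ m)/(s-r)\<bar>"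
        by (simp add: abs_divide)
      also have "\<dots> < e/K * K"
      proof -
        have "\<bar>(V * s ^ m - V * r ^ m)/(s-r)\<bar> < K" using elim(1) unfolding K_def dist_real_def by linarith
        thus ?thesis using e K by (intro mult_strict_left_mono) auto
      qed
      finally show ?case using K by (simp add: dist_real_def)
    qed
  qed
  have lim: "((\<lambda>s. h r * ((V * s ^ m - V * r ^ m)/(s - r)) + E s/(s-r)) \<longlongrightarrow> h r * D + 0) (at r within {0..<1})"
    by (intro tendsto_intros q E0)
  have "((\<lambda>s. (A s - A r)/(s - r)) \<longlongrightarrow> h r * D + 0) (at r within {0..<1})"
  proof (rule Lim_transform_eventually[OF lim])
    show "eventually (\<lambda>s. h r * ((V * s ^ m - V * r ^ m)/(s - r)) + E s/(s-r) = (A s - A r)/(s - r)) (at r within {0..<1})"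
      unfolding eventually_at by (auto intro!: exI[of _ 1] simp: E_def diff_divide_distrib right_diff_distrib)
  qed
  thus ?thesis by (simp add: has_field_derivative_iff A_def D_def V_def m_def)
qed

lemma radial_integral:
  fixes h P :: "real \<Rightarrow> real" and R :: real
  assumes hc: "continuous_on {0..<1} h"
    and P: "\<And>r::real. 0 \<le> r \<Longrightarrow> r \<le> R \<Longrightarrow> (P has_real_derivative
               h r * (unit_ball_vol DIM('a) * (DIM('a) * r ^ (DIM('a) - 1)))) (at r within {0..R})"
    and P0: "P 0 = 0" and R: "0 \<le> R" "R < 1"
  shows "(LINT x:ball (0::'a::euclidean_space) R|lborel. h (norm x)) = P R"
proof -
  define A where "A = (\<lambda>s. LINT x:ball (0::'a) s|lborel. h (norm x))"
  have "\<exists>c. \<forall>s\<in>{0..R}. A s - P s = c"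
  proof (rule has_field_derivative_zero_constant)
    fix s assume s: "s \<in> {0..R}"
    have "(A has_real_derivative h s * (unit_ball_vol DIM('a) * (DIM('a) * s ^ (DIM('a) - 1)))) (at s within {0..R})"
      unfolding A_def by (rule has_field_derivative_subset[OF radial_deriv[OF hc]]) (use s R in auto)
    moreover have "(P has_real_derivative h s * (unit_ball_vol DIM('a) * (DIM('a) * s ^ (DIM('a) - 1)))) (at s within {0..R})"
      using P s by auto
    ultimately have "((\<lambda>s. A s - P s) has_real_derivative
        h s * (unit_ball_vol DIM('a) * (DIM('a) * s ^ (DIM('a) - 1))) - h s * (unit_ball_vol DIM('a) * (DIM('a) * s ^ (DIM('a) - 1)))) (at s within {0..R})" by (rule DERIV_diff)
    then show "((\<lambda>s. A s - P s) has_real_derivative 0) (at s within {0..R})"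
      by simp
  qed auto
  then obtain c where c: "\<And>s. s \<in> {0..R} \<Longrightarrow> A s - P s = c" by blast
  have "A 0 = 0" by (simp add: A_def set_lebesgue_integral_def)
  hence "c = 0" using c[of 0] P0 R by simp
  thus ?thesis using c[of R] R by (simp add: A_def)
qed

definition Lf :: "real \<Rightarrow> real" where "Lf u = 2*u/(1-u^2)"
definition Cf :: "real \<Rightarrow> real" where "Cf u = (1+u^2)/(1-u^2)"
definition hk :: "nat \<Rightarrow> (real \<Rightarrow> real) \<Rightarrow> real \<Rightarrow> real" where
  "hk m k u = k (Lf u) * Cf u * (2/(1-u^2))^m"

lemma sq_ne: "u^2 = 1 \<Longrightarrow> 0 \<le> u \<Longrightarrow> u < (1::real) \<Longrightarrow> False"
  using abs_square_less_1[of u] by auto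

lemma one_minus_sq_pos: "0 \<le> u \<Longrightarrow> u < (1::real) \<Longrightarrow> 1 - u^2 > 0"
  by (simp add: abs_square_less_1)

lemma hlam_eq: "norm x < 1 \<Longrightarrow> hlam x = Lf (norm x)"
proof -
  assume x: "norm x < 1"
  define u where "u = norm x"
  have u: "0 \<le> u" "u < 1" using x by (auto simp: u_def)
  have uu: "u*u \<le> u" using u mult_right_mono[of u 1 u] by simp
  have ne: "1 - u*u \<noteq> 0" "2 - u*(u*2) \<noteq> 0" using uu u by auto
  have "hlam x = ((1+u)/(1-u) - inverse ((1+u)/(1-u)))/2"
    unfolding hlam_def hdist0_def u_def[symmetric] using u by (subst sinh_ln_real) auto
  also have "\<dots> = Lf u" using u ne by (simp add: Lf_def field_simps power2_eq_square)
  finally show ?thesis by (simp add: u_def)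
qed

lemma hlam'_eq: "norm x < 1 \<Longrightarrow> hlam' x = Cf (norm x)"
proof -
  assume x: "norm x < 1"
  define u where "u = norm x"
  have u: "0 \<le> u" "u < 1" using x by (auto simp: u_def)
  have uu: "u*u \<le> u" using u mult_right_mono[of u 1 u] by simp
  have ne: "1 - u*u \<noteq> 0" "2 - u*(u*2) \<noteq> 0" using uu u by auto
  have "hlam' x = ((1+u)/(1-u) + inverse ((1+u)/(1-u)))/2"
    unfolding hlam'_def hdist0_def u_def[symmetric] using u by (subst cosh_ln_real) auto
  also have "\<dots> = Cf u" using u ne by (simp add: Cf_def field_simps power2_eq_square)
  finally show ?thesis by (simp add: u_def)
qed

lemma integrand_eq:
  "norm (x::'a::euclidean_space) < 1 \<Longrightarrow> k (hlam x) * hlam' x * hdens x = hk DIM('a) k (norm x)"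
  by (simp add: hlam_eq hlam'_eq hdens_def hk_def)

lemma Lf_deriv: "\<bar>u\<bar> < 1 \<Longrightarrow> (Lf has_real_derivative 2*(1+u^2)/(1-u^2)^2) (at u)"
proof -
  assume u: "\<bar>u\<bar> < 1"
  hence ne: "1 - u^2 \<noteq> 0" "u^2 \<noteq> 1" using abs_square_less_1[of u] by auto
  have d1: "((\<lambda>u. 2*u) has_real_derivative 2) (at u)" by (auto intro!: derivative_eq_intros)
  have d2: "((\<lambda>u. 1 - u^2) has_real_derivative -(2*u)) (at u)" by (auto intro!: derivative_eq_intros)
  have "((\<lambda>u. 2*u/(1-u^2)) has_real_derivative (2*(1-u^2) - 2*u*(-(2*u)))/((1-u^2)*(1-u^2))) (at u)"
    by (rule DERIV_divide[OF d1 d2 ne(1)])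
  moreover have "(2*(1-u^2) - 2*u*(-(2*u)))/((1-u^2)*(1-u^2)) = 2*(1+u^2)/(1-u^2)^2"
    by (simp add: power2_eq_square algebra_simps)
  ultimately show ?thesis unfolding Lf_def[abs_def] by simp
qed

lemma Lf_cont: "continuous_on {0..<1} Lf"
  unfolding Lf_def[abs_def]
  by (intro continuous_intros) (auto dest: sq_ne)

lemma hk_cont: assumes "continuous_on UNIV k" shows "continuous_on {0..<1} (hk m k)"
proof -
  have "continuous_on {0..<1} (\<lambda>u. k (Lf u))"
    by (rule continuous_on_compose2[OF assms Lf_cont]) auto
  thus ?thesis unfolding hk_def[abs_def] Cf_def
    by (intro continuous_intros) (auto dest: sq_ne)
qed

lemma sphere_area_eq: "m \<ge> 1 \<Longrightarrow> sphere_area (m-1) = real m * unit_ball_vol (real m)"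
proof -
  assume m: "m \<ge> 1"
  have e: "real (m-1) + 1 = real m" using m by simp
  have nz: "real m / 2 \<notin> \<int>\<^sub>\<le>\<^sub>0" using m by (auto dest: nonpos_Ints_nonpos)
  have g: "Gamma (real m / 2 + 1) = real m / 2 * Gamma (real m / 2)" by (rule Gamma_plus1[OF nz])
  have "Gamma (real m / 2) > 0" using m by auto
  thus ?thesis unfolding sphere_area_def unit_ball_vol_def e g using m by (simp add: field_simps)
qed

lemma Lf_mono: "0 \<le> u \<Longrightarrow> u \<le> v \<Longrightarrow> v < 1 \<Longrightarrow> Lf u \<le> Lf v"
  unfolding Lf_def
  by (rule frac_le) (auto intro!: power_mono one_minus_sq_pos simp: abs_square_less_1)

lemma Lf_strict_mono: "0 \<le> u \<Longrightarrow> u < v \<Longrightarrow> v < 1 \<Longrightarrow> Lf u < Lf v"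
  unfolding Lf_def
  by (rule frac_less) (auto intro!: power_mono one_minus_sq_pos simp: abs_square_less_1)

lemma Lf_nonneg: "0 \<le> u \<Longrightarrow> u < 1 \<Longrightarrow> Lf u \<ge> 0"
  using Lf_mono[of 0 u] by (simp add: Lf_def)

lemma Lf_alg: "0 \<le> r \<Longrightarrow> r < 1 \<Longrightarrow>
   (Lf r)^n * (2*(1+r^2)/(1-r^2)^2) = Cf r * (2/(1-r^2))^(Suc n) * r^n"
proof -
  assume r: "0 \<le> r" "r < 1"
  hence w: "1 - r^2 > 0" by (rule one_minus_sq_pos)
  have gen: "(2*r/w)^n * (2*(1+r^2)/w^2) = (1+r^2)/w * (2/w)^(Suc n) * r^n" if "w \<noteq> 0" for w :: real
    using that by (simp add: power_divide power_mult_distrib field_simps power2_eq_square)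
  show ?thesis unfolding Lf_def Cf_def using gen[of "1-r^2"] w by simp
qed

lemma hyp_radial:
  fixes k :: "real \<Rightarrow> real" and R :: real
  assumes kc: "continuous_on UNIV k" and R: "0 \<le> R" "R < 1"
  shows "(LINT x:ball (0::'a::euclidean_space) R|lborel. k (hlam x) * hlam' x * hdens x)
          = sphere_area (DIM('a)-1) * integral {0..Lf R} (\<lambda>s. k s * s^(DIM('a)-1))"
proof -
  define m where "m = DIM('a)"
  define n where "n = m - 1"
  have mn: "m = Suc n" unfolding n_def m_def by simp
  define V where "V = unit_ball_vol (real m)"
  define g where "g = (\<lambda>s. k s * s ^ n)"
  have gc: "continuous_on UNIV g" unfolding g_def by (intro continuous_intros kc)
  define P where "P = (\<lambda>u. sphere_area n * integral {0..Lf u} g)"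
  have "(LINT x:ball (0::'a) R|lborel. k (hlam x) * hlam' x * hdens x)
        = (LINT x:ball (0::'a) R|lborel. hk DIM('a) k (norm x))"
    by (rule set_lebesgue_integral_cong) (use R in \<open>auto simp: integrand_eq\<close>)
  also have "\<dots> = P R"
  proof (rule radial_integral[OF hk_cont[OF kc] _ _ R])
    show "P 0 = 0" by (simp add: P_def Lf_def)
    fix r :: real assume r: "0 \<le> r" "r \<le> R"
    have r1: "r < 1" using r R by simp
    have sub: "Lf ` {0..R} \<subseteq> {0..Lf R}" using R Lf_mono Lf_nonneg by force
    have dI: "((\<lambda>t. integral {0..t} g) has_real_derivative g (Lf r)) (at (Lf r) within {0..Lf R})"
      by (rule integral_has_real_derivative) (use gc r r1 R Lf_mono Lf_nonneg in \<open>auto intro: continuous_on_subset\<close>)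
    have dI': "((\<lambda>t. integral {0..t} g) has_real_derivative g (Lf r)) (at (Lf r) within Lf ` {0..R})"
      by (rule has_field_derivative_subset[OF dI sub])
    have dL: "(Lf has_real_derivative 2*(1+r^2)/(1-r^2)^2) (at r within {0..R})"
      by (rule has_field_derivative_at_within[OF Lf_deriv]) (use r r1 in auto)
    have "(((\<lambda>t. integral {0..t} g) \<circ> Lf) has_real_derivative g (Lf r) * (2*(1+r^2)/(1-r^2)^2)) (at r within {0..R})"
      by (rule DERIV_image_chain[OF dI' dL])
    hence "(P has_real_derivative sphere_area n * (g (Lf r) * (2*(1+r^2)/(1-r^2)^2))) (at r within {0..R})"
      unfolding P_def by (intro DERIV_cmult) (simp add: o_def)
    moreover have "sphere_area n * (g (Lf r) * (2*(1+r^2)/(1-r^2)^2))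
        = hk DIM('a) k r * (unit_ball_vol DIM('a) * (DIM('a) * r ^ (DIM('a) - 1)))"
    proof -
      have sa: "sphere_area n = real m * V" unfolding n_def V_def by (rule sphere_area_eq) (simp add: m_def)
      have al: "(Lf r)^n * (2*(1+r^2)/(1-r^2)^2) = Cf r * (2/(1-r^2))^m * r^(m-1)"
        using Lf_alg[of r n] r r1 by (simp add: mn)
      have "sphere_area n * (g (Lf r) * (2*(1+r^2)/(1-r^2)^2)) = real m * V * k (Lf r) * ((Lf r)^n * (2*(1+r^2)/(1-r^2)^2))"
        by (simp add: sa g_def mult_ac)
      also have "\<dots> = real m * V * k (Lf r) * (Cf r * (2/(1-r^2))^m * r^(m-1))" by (simp only: al)
      also have "\<dots> = hk m k r * (V * (m * r^(m-1)))" by (simp add: hk_def mult_ac)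
      finally show ?thesis by (simp add: m_def V_def)
    qed
    ultimately show "(P has_real_derivative hk DIM('a) k r * (unit_ball_vol DIM('a) * (DIM('a) * r ^ (DIM('a) - 1)))) (at r within {0..R})"
      by simp
  qed
  finally show ?thesis by (simp add: P_def g_def n_def m_def)
qed

definition Rf :: "real \<Rightarrow> real" where "Rf \<rho> = (exp \<rho> - 1)/(exp \<rho> + 1)"

lemma Rf_lt1: "Rf \<rho> < 1" unfolding Rf_def by (simp add: add_pos_pos)

lemma Rf_pos: "\<rho> > 0 \<Longrightarrow> Rf \<rho> > 0" unfolding Rf_def by (simp add: add_pos_pos)

lemma hd_cmp:
  assumes u: "0 \<le> u" "u < (1::real)"
  shows "ln ((1+u)/(1-u)) < \<rho> \<longleftrightarrow> u < Rf \<rho>" and "ln ((1+u)/(1-u)) \<le> \<rho> \<longleftrightarrow> u \<le> Rf \<rho>"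
proof -
  define E where "E = exp \<rho>"
  have E: "E > 0" by (simp add: E_def)
  have z: "(1+u)/(1-u) > 0" using u by simp
  have "ln ((1+u)/(1-u)) < \<rho> \<longleftrightarrow> (1+u)/(1-u) < E"
    unfolding E_def using z by (metis exp_less_cancel_iff exp_ln)
  also have "\<dots> \<longleftrightarrow> 1 + u < E * (1-u)" using u by (simp add: divide_less_eq)
  also have "\<dots> \<longleftrightarrow> u * (E + 1) < E - 1" by (simp add: algebra_simps)
  also have "\<dots> \<longleftrightarrow> u < Rf \<rho>" unfolding Rf_def E_def[symmetric] using E by (simp add: less_divide_eq add_pos_pos)
  finally show "ln ((1+u)/(1-u)) < \<rho> \<longleftrightarrow> u < Rf \<rho>" .
  have "ln ((1+u)/(1-u)) \<le> \<rho> \<longleftrightarrow> (1+u)/(1-u) \<le> E"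
    unfolding E_def using z by (metis exp_le_cancel_iff exp_ln)
  also have "\<dots> \<longleftrightarrow> 1 + u \<le> E * (1-u)" using u by (simp add: divide_le_eq)
  also have "\<dots> \<longleftrightarrow> u * (E + 1) \<le> E - 1" by (simp add: algebra_simps)
  also have "\<dots> \<longleftrightarrow> u \<le> Rf \<rho>" unfolding Rf_def E_def[symmetric] using E by (simp add: le_divide_eq add_pos_pos)
  finally show "ln ((1+u)/(1-u)) \<le> \<rho> \<longleftrightarrow> u \<le> Rf \<rho>" .
qed

lemma hyp_ball0_eq: "hyp_ball0 \<rho> = ball (0::'a::euclidean_space) (Rf \<rho>)"
proof -
  have "x \<in> hyp_ball0 \<rho> \<longleftrightarrow> x \<in> ball 0 (Rf \<rho>)" for x :: 'a
  proof (cases "norm x < 1")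
    case True thus ?thesis using hd_cmp(1)[of "norm x" \<rho>]
      by (simp add: hyp_ball0_def poincare_ball_def hdist0_def)
  next
    case False thus ?thesis using Rf_lt1[of \<rho>] by (simp add: hyp_ball0_def poincare_ball_def)
  qed
  thus ?thesis by blast
qed

lemma Rf_inv: "0 \<le> R \<Longrightarrow> R < 1 \<Longrightarrow> Rf (ln ((1+R)/(1-R))) = R"
  unfolding Rf_def by (simp add: field_simps)

lemma ln_pos_R: "0 < (R::real) \<Longrightarrow> R < 1 \<Longrightarrow> ln ((1+R)/(1-R)) > 0"
proof -
  assume R: "0 < R" "R < 1"
  have d: "0 < 1 - R" using R by simp
  have "1 < (1+R)/(1-R)" using R d by (simp add: less_divide_eq)
  thus ?thesis by (rule ln_gt_zero)
qed

lemma Lf_inv: assumes "0 \<le> t" shows "Lf (t / (1 + sqrt (1 + t^2))) = t" "0 \<le> t / (1 + sqrt (1 + t^2))" "t / (1 + sqrt (1 + t^2)) < 1"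
proof -
  define q where "q = sqrt (1 + t^2)"
  have q2: "q^2 = 1 + t^2" unfolding q_def by simp
  have qt: "t < q" unfolding q_def using real_sqrt_less_mono[of "t^2" "1+t^2"] assms by simp
  have q0: "q \<ge> 0" unfolding q_def by simp
  show "0 \<le> t / (1 + sqrt (1 + t^2))" using assms by simp
  show "t / (1 + sqrt (1 + t^2)) < 1" using qt q0 by (simp add: q_def[symmetric])
  have e1: "(1+q)^2 - t^2 = 1 + 2*q + q^2 - t^2" by (simp add: power2_sum)
  have e2: "(1+q)^2 - t^2 = 2*(1+q)" using e1 q2 by (simp add: algebra_simps)
  have "1 - (t/(1+q))^2 = ((1+q)^2 - t^2)/(1+q)^2"
    using q0 by (simp add: power_divide field_simps)
  also have "\<dots> = 2*(1+q)/(1+q)^2" by (simp only: e2)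
  also have "\<dots> = 2/(1+q)"
  proof -
    have qq: "1 + q \<noteq> 0" using q0 by simp
    show ?thesis by (simp only: power2_eq_square nonzero_mult_divide_mult_cancel_right[OF qq])
  qed
  finally have "1 - (t/(1+q))^2 = 2/(1+q)" .
  thus "Lf (t / (1 + sqrt (1 + t^2))) = t"
    unfolding Lf_def q_def[symmetric] using q0 by (simp add: field_simps)
qed

lemma hyp_integrable:
  fixes k :: "real \<Rightarrow> real"
  assumes kc: "continuous_on UNIV k" and b: "b < 1" and S: "S \<in> sets lborel" "S \<subseteq> cball 0 b"
  shows "set_integrable lborel S (\<lambda>x::'a::euclidean_space. k (hlam x) * hlam' x * hdens x)"
proof -
  have "set_integrable lborel S (\<lambda>x::'a. hk DIM('a) k (norm x))"
    by (rule radial_set_integrable[OF hk_cont[OF kc] b S])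
  moreover have "hk DIM('a) k (norm x) = k (hlam x) * hlam' x * hdens x" if x: "x \<in> S" for x :: 'a
  proof -
    have "norm x \<le> b" using x S(2) by (auto simp: subset_iff)
    hence "norm x < 1" using b by linarith
    thus ?thesis by (simp add: integrand_eq)
  qed
  ultimately show ?thesis using set_integrable_cong[of lborel lborel S S "\<lambda>x. hk DIM('a) k (norm x)" "\<lambda>x. k (hlam x) * hlam' x * hdens x"] by simp
qed

lemma open_null_empty:
  assumes "open (U::'a::euclidean_space set)" "emeasure lborel U = 0"
  shows "U = {}"
proof (rule ccontr)
  assume "U \<noteq> {}"
  then obtain x where "x \<in> U" by blast
  then obtain e where e: "e > 0" "ball x e \<subseteq> U" using assms(1) open_contains_ball by blast
  have le: "emeasure lborel (ball x e) \<le> emeasure lborel U" by (rule emeasure_mono[OF e(2)]) (use assms in auto)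
  have eq: "emeasure lborel (ball x e) = ennreal (unit_ball_vol DIM('a) * e ^ DIM('a))"
    using e by (intro emeasure_ball) auto
  have "unit_ball_vol DIM('a) * e ^ DIM('a) > 0" using e by simp
  hence "0 < emeasure lborel (ball x e)" unfolding eq by (simp only: ennreal_less_zero_iff)
  hence "0 < emeasure lborel U" using le by (rule less_le_trans)
  thus False using assms(2) by simp
qed

lemma zero_integral_open:
  fixes f :: "'a::euclidean_space \<Rightarrow> real"
  assumes si: "set_integrable lborel S f" and S: "S \<in> sets lborel" and nn: "\<And>x. x \<in> S \<Longrightarrow> 0 \<le> f x"
    and z: "(LINT x:S|lborel. f x) = 0" and U: "open U" "U \<subseteq> S" and p: "\<And>x. x \<in> U \<Longrightarrow> 0 < f x"
  shows "U = {}"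
proof -
  have int: "integrable lborel (\<lambda>x. indicator S x * f x)" using si by (simp add: set_integrable_def)
  have "(\<integral>x. indicator S x * f x \<partial>lborel) = 0" using z by (simp add: set_lebesgue_integral_def)
  moreover have "AE x in lborel. 0 \<le> indicator S x * f x" using nn by (auto simp: indicator_def)
  ultimately have "AE x in lborel. indicator S x * f x = 0" using integral_nonneg_eq_0_iff_AE[OF int] by simp
  hence ae: "AE x in lborel. x \<notin> U"
  proof (rule AE_mp, intro AE_I2 impI)
    fix x assume "indicator S x * f x = 0"
    show "x \<notin> U"
    proof
      assume xU: "x \<in> U"
      hence "x \<in> S" "0 < f x" using U(2) p by auto
      thus False using \<open>indicator S x * f x = 0\<close> by simp
    qed
  qed
  have "emeasure lborel U = 0"
    using ae AE_iff_measurable[of U lborel "\<lambda>x. x \<notin> U"] U(1) by auto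
  thus ?thesis by (rule open_null_empty[OF U(1)])
qed



locale phi_ass =
  fixes \<phi> :: "real \<Rightarrow> real"
  assumes smooth: "smooth_fun \<phi>"
    and pos: "\<And>s. \<phi> s > 0"
    and even: "\<And>s. \<phi> (- s) = \<phi> s"
    and logconv: "\<And>s. deriv (deriv (\<lambda>u. ln (\<phi> u))) s \<ge> 0"
begin

definition gq :: "real \<Rightarrow> real" where "gq s = deriv \<phi> s / \<phi> s"

lemma d0: "(\<phi> has_real_derivative deriv \<phi> x) (at x)"
  using smooth unfolding smooth_fun_def
  by (metis DERIV_deriv_iff_real_differentiable funpow_0)

lemma d1: "(deriv \<phi> has_real_derivative deriv (deriv \<phi>) x) (at x)"
proof -
  have "(deriv ^^ Suc 0) \<phi> differentiable (at x)" using smooth unfolding smooth_fun_def by blast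
  thus ?thesis by (simp add: DERIV_deriv_iff_real_differentiable)
qed

lemma cont0: "continuous_on UNIV \<phi>"
  using d0 by (meson DERIV_continuous continuous_at_imp_continuous_on)

lemma cont1: "continuous_on UNIV (deriv \<phi>)"
  using d1 by (meson DERIV_continuous continuous_at_imp_continuous_on)

lemma gq_cont: "continuous_on UNIV gq"
  unfolding gq_def[abs_def] using cont0 cont1 pos
  by (intro continuous_intros) (auto simp: less_imp_neq[symmetric])

lemma dphi0: "deriv \<phi> 0 = 0"
proof -
  have "((\<lambda>s. \<phi> (- s)) has_real_derivative deriv \<phi> (- 0) * (- 1)) (at 0)"
    by (rule DERIV_chain2[OF d0]) (auto intro!: derivative_eq_intros)
  moreover have "(\<lambda>s. \<phi> (- s)) = \<phi>" using even by auto
  ultimately have "(\<phi> has_real_derivative - deriv \<phi> 0) (at 0)" by simp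
  from DERIV_unique[OF this d0] show ?thesis by simp
qed

lemma dgq: "(gq has_real_derivative deriv gq x) (at x)"
proof -
  have "(gq has_real_derivative (deriv (deriv \<phi>) x * \<phi> x - deriv \<phi> x * deriv \<phi> x) / (\<phi> x * \<phi> x)) (at x)"
    unfolding gq_def[abs_def] by (rule DERIV_divide[OF d1 d0]) (use pos in \<open>auto simp: less_imp_neq[symmetric]\<close>)
  thus ?thesis by (metis DERIV_imp_deriv)
qed

lemma gq_eq: "deriv (\<lambda>u. ln (\<phi> u)) = gq"
proof
  fix s
  have "DERIV ln (\<phi> s) :> inverse (\<phi> s)" by (rule DERIV_ln) (rule pos)
  from DERIV_chain2[OF this d0]
  have "((\<lambda>u. ln (\<phi> u)) has_real_derivative 1 / \<phi> s * deriv \<phi> s) (at s)"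
    by (simp add: inverse_eq_divide)
  thus "deriv (\<lambda>u. ln (\<phi> u)) s = gq s" by (simp add: DERIV_imp_deriv gq_def)
qed

lemma gq_mono: "a \<le> b \<Longrightarrow> gq a \<le> gq b"
proof (rule DERIV_nonneg_imp_nondecreasing[of a b gq])
  fix x show "\<exists>y. (gq has_real_derivative y) (at x) \<and> y \<ge> 0"
    using dgq logconv[of x] by (auto simp: gq_eq)
qed

lemma gq0: "gq 0 = 0" by (simp add: gq_def dphi0)

lemma gq_nonneg: "0 \<le> s \<Longrightarrow> 0 \<le> gq s" using gq_mono[of 0 s] gq0 by simp

lemma dphi_eq: "deriv \<phi> s = gq s * \<phi> s" using pos[of s] by (simp add: gq_def)

lemma dphi_nonneg: "0 \<le> s \<Longrightarrow> 0 \<le> deriv \<phi> s"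
  using gq_nonneg[of s] pos[of s] by (simp add: dphi_eq)

lemma phi_mono: "0 \<le> a \<Longrightarrow> a \<le> b \<Longrightarrow> \<phi> a \<le> \<phi> b"
  by (rule DERIV_nonneg_imp_nondecreasing[of a b \<phi>]) (use d0 dphi_nonneg in force)+

lemma phi_const: assumes "0 \<le> t" "gq t = 0" shows "\<phi> t = \<phi> 0"
proof -
  have z: "deriv \<phi> s = 0" if "s \<in> {0..t}" for s
  proof -
    have "0 \<le> gq s" "gq s \<le> gq t" using that gq_nonneg gq_mono by auto
    thus ?thesis using assms by (simp add: dphi_eq)
  qed
  have "\<exists>c. \<forall>s\<in>{0..t}. \<phi> s = c"
  proof (rule has_field_derivative_zero_constant)
    fix s assume "s \<in> {0..t}"
    thus "(\<phi> has_real_derivative 0) (at s within {0..t})"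
      using has_field_derivative_at_within[OF d0[of s]] z[of s] by simp
  qed auto
  thus ?thesis using assms by auto
qed

end



lemma pos_facts:
  assumes "norm (x::'a::euclidean_space) < 1"
  shows "0 \<le> hlam x" "0 < hlam' x" "0 < hdens x"
proof -
  have u: "0 \<le> norm x" "norm x < 1" using assms by auto
  have w: "1 - (norm x)^2 > 0" by (rule one_minus_sq_pos[OF u])
  show "0 \<le> hlam x" using hlam_eq[OF assms] Lf_nonneg[OF u] by simp
  show "0 < hlam' x" using hlam'_eq[OF assms] w by (simp add: Cf_def add_pos_nonneg)
  show "0 < hdens x" using w by (simp add: hdens_def)
qed

lemma hlam_cont: "continuous_on (ball 0 1) (hlam :: 'a::euclidean_space \<Rightarrow> real)"
proof -
  have "continuous_on (ball (0::'a) 1) (\<lambda>x. Lf (norm x))"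
    by (rule continuous_on_compose2[OF Lf_cont continuous_on_norm_id]) auto
  thus ?thesis by (rule continuous_on_eq) (simp add: hlam_eq)
qed

theorem lemma2p4:
  fixes \<Omega> :: "'a::euclidean_space set"
    and \<phi> :: "real \<Rightarrow> real"
    and \<eta> :: "real \<Rightarrow> real"
  defines "n \<equiv> DIM('a) - 1"
  assumes dim: "DIM('a) \<ge> 2"
    and dom: "hyp_bounded_domain \<Omega>"
    and smooth: "smooth_fun \<phi>"
    and pos: "\<And>s. \<phi> s > 0"
    and even: "\<And>s. \<phi> (- s) = \<phi> s"
    and logconv: "\<And>s. deriv (deriv (\<lambda>u. ln (\<phi> u))) s \<ge> 0"
    and eta: "\<And>t. t \<ge> 0 \<Longrightarrow>
               \<eta> (sphere_area n * integral {0..t} (\<lambda>s. \<phi> s * s ^ n))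
                 = sphere_area n * integral {0..t} (\<lambda>s. deriv \<phi> s * s ^ (n + 1))"
  shows "(hyp_integral \<Omega> (\<lambda>x. deriv \<phi> (hlam x) * hlam' x * hlam x)
           \<ge> \<eta> (hyp_integral \<Omega> (\<lambda>x. \<phi> (hlam x) * hlam' x)))
         \<and> (\<not> (\<exists>c. \<forall>x\<in>\<Omega>. \<phi> (hlam x) = c) \<longrightarrow>
           (hyp_integral \<Omega> (\<lambda>x. deriv \<phi> (hlam x) * hlam' x * hlam x)
              = \<eta> (hyp_integral \<Omega> (\<lambda>x. \<phi> (hlam x) * hlam' x))
            \<longleftrightarrow> (\<exists>\<rho>>0. \<Omega> = hyp_ball0 \<rho>)))"
proof -
  interpret P: phi_ass \<phi> using smooth pos even logconv by unfold_locales
  define \<omega> where "\<omega> = sphere_area n"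
  define \<Phi> where "\<Phi> = (\<lambda>t. \<omega> * integral {0..t} (\<lambda>s. \<phi> s * s ^ n))"
  define \<Psi> where "\<Psi> = (\<lambda>t. \<omega> * integral {0..t} (\<lambda>s. deriv \<phi> s * s ^ (n + 1)))"
  define Gd where "Gd = (\<lambda>x::'a. \<phi> (hlam x) * hlam' x * hdens x)"
  define Fd where "Fd = (\<lambda>x::'a. deriv \<phi> (hlam x) * hlam' x * hlam x * hdens x)"
  have hG: "hyp_integral \<Omega> (\<lambda>x. \<phi> (hlam x) * hlam' x) = (LINT x:\<Omega>|lborel. Gd x)"
    by (simp add: hyp_integral_def Gd_def)
  have hF: "hyp_integral \<Omega> (\<lambda>x. deriv \<phi> (hlam x) * hlam' x * hlam x) = (LINT x:\<Omega>|lborel. Fd x)"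
    by (simp add: hyp_integral_def Fd_def)
  have \<omega>_pos: "\<omega> > 0" using sphere_area_eq[of "DIM('a)"] by (simp add: \<omega>_def n_def)
  have k1c: "continuous_on UNIV (\<lambda>s. deriv \<phi> s * s)" using P.cont1 by (intro continuous_intros)
  have Fd_alt: "Fd = (\<lambda>x. (\<lambda>s. deriv \<phi> s * s) (hlam x) * hlam' x * hdens x)"
    by (auto simp: Fd_def fun_eq_iff mult_ac)
  have ballG: "(LINT x:ball 0 R|lborel. Gd x) = \<Phi> (Lf R)" if "0 \<le> R" "R < 1" for R
    using hyp_radial[OF P.cont0 that, where 'a='a] by (simp add: Gd_def \<Phi>_def \<omega>_def n_def)
  have ballF: "(LINT x:ball 0 R|lborel. Fd x) = \<Psi> (Lf R)" if "0 \<le> R" "R < 1" for R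
  proof -
    have "(LINT x:ball (0::'a) R|lborel. Fd x) = \<omega> * integral {0..Lf R} (\<lambda>s. (deriv \<phi> s * s) * s^n)"
      using hyp_radial[OF k1c that, where 'a='a] by (simp add: Fd_alt \<omega>_def n_def)
    also have "integral {0..Lf R} (\<lambda>s. (deriv \<phi> s * s) * s^n) = integral {0..Lf R} (\<lambda>s. deriv \<phi> s * s^(n+1))"
      by (rule integral_cong) (simp add: mult_ac)
    finally show ?thesis by (simp add: \<Psi>_def)
  qed
  have eqball: "(LINT x:ball 0 R|lborel. Fd x) = \<eta> (LINT x:ball 0 R|lborel. Gd x)" if "0 \<le> R" "R < 1" for R
    using eta[of "Lf R"] Lf_nonneg[OF that] ballF[OF that] ballG[OF that] by (simp add: \<Phi>_def \<Psi>_def \<omega>_def)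

  have \<Omega>ne: "\<Omega> \<noteq> {}" and \<Omega>open: "open \<Omega>" and \<Omega>reg: "interior (closure \<Omega>) = \<Omega>"
    and \<Omega>sub: "\<Omega> \<subseteq> ball 0 1"
    using dom by (auto simp: hyp_bounded_domain_def poincare_ball_def)
  obtain Rh where Rh: "\<And>x. x \<in> \<Omega> \<Longrightarrow> hdist0 x \<le> Rh" using dom by (auto simp: hyp_bounded_domain_def)
  define b where "b = Rf Rh"
  have b1: "b < 1" by (simp add: b_def Rf_lt1)
  have \<Omega>cb: "\<Omega> \<subseteq> cball 0 b"
  proof
    fix x assume x: "x \<in> \<Omega>"
    hence "norm x < 1" using \<Omega>sub by auto
    hence "norm x \<le> Rf Rh" using hd_cmp(2)[of "norm x" Rh] Rh[OF x] by (simp add: hdist0_def)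
    thus "x \<in> cball 0 b" by (simp add: b_def)
  qed
  have \<Omega>sets: "\<Omega> \<in> sets lborel" using \<Omega>open by auto
  have intG: "set_integrable lborel S Gd" if "S \<in> sets lborel" "S \<subseteq> cball 0 b2" "b2 < 1" for S b2
    unfolding Gd_def by (rule hyp_integrable[OF P.cont0 that(3) that(1,2)])
  have intF: "set_integrable lborel S Fd" if "S \<in> sets lborel" "S \<subseteq> cball 0 b2" "b2 < 1" for S b2
    unfolding Fd_alt by (rule hyp_integrable[OF k1c that(3) that(1,2)])
  have Gpos: "0 < Gd x" if "norm x < 1" for x
    using pos_facts[OF that] P.pos[of "hlam x"] by (simp add: Gd_def)

  define I where "I = (LINT x:\<Omega>|lborel. Gd x)"
  have I0: "0 \<le> I"
  proof -
    have "(LINT x:\<Omega>|lborel. (0::real)) \<le> I" unfolding I_def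
      by (rule set_integral_mono) (use intG[OF \<Omega>sets \<Omega>cb b1] Gpos \<Omega>sub in \<open>auto simp: set_integrable_def less_imp_le\<close>)
    thus ?thesis by (simp add: set_lebesgue_integral_def)
  qed
  define g0 where "g0 = (\<lambda>s. \<phi> s * s ^ n)"
  have g0c: "continuous_on UNIV g0" unfolding g0_def using P.cont0 by (intro continuous_intros)
  have g0int: "g0 integrable_on {a..b'}" for a b'
    by (rule integrable_continuous_interval) (rule continuous_on_subset[OF g0c], auto)
  have \<Phi>g: "\<Phi> t = \<omega> * integral {0..t} g0" for t by (simp add: \<Phi>_def g0_def)
  have \<Phi>low: "\<Phi> t \<ge> \<omega> * \<phi> 0 * (t - 1)" if t: "t \<ge> 1" for t
  proof -
    define f where "f = (\<lambda>s. integral {0..s} g0 - \<phi> 0 * s)"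
    have "f 1 \<le> f t"
    proof (rule DERIV_nonneg_imp_nondecreasing[of 1 t f])
      fix x assume x: "1 \<le> x" "x \<le> t"
      have "(( \<lambda>s. integral {0..s} g0) has_real_derivative g0 x) (at x within {0..t+1})"
        by (rule integral_has_real_derivative) (use x in \<open>auto intro: continuous_on_subset[OF g0c]\<close>)
      moreover have "at x within {0..t+1} = at x"
        by (rule at_within_interior) (use x in auto)
      ultimately have "(( \<lambda>s. integral {0..s} g0) has_real_derivative g0 x) (at x)" by simp
      hence "(f has_real_derivative g0 x - \<phi> 0) (at x)"
        unfolding f_def by (auto intro!: derivative_eq_intros)
      moreover have "g0 x - \<phi> 0 \<ge> 0"
      proof -
        have "\<phi> 0 \<le> \<phi> x" using P.phi_mono[of 0 x] x by simp
        also have "\<dots> \<le> \<phi> x * x ^ n" using x P.pos[of x] by (simp add: one_le_power)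
        finally show ?thesis by (simp add: g0_def)
      qed
      ultimately show "\<exists>y. (f has_real_derivative y) (at x) \<and> y \<ge> 0" by blast
    qed (use t in simp)
    moreover have "integral {0..1} g0 \<ge> 0"
      by (rule Henstock_Kurzweil_Integration.integral_nonneg[OF g0int]) (use P.pos in \<open>auto simp: g0_def less_imp_le\<close>)
    ultimately have "integral {0..t} g0 \<ge> \<phi> 0 * (t - 1)" by (simp add: f_def algebra_simps)
    thus ?thesis using \<omega>_pos by (simp add: \<Phi>g mult.assoc)
  qed
  define T where "T = 1 + I / (\<omega> * \<phi> 0)"
  have \<omega>\<phi>: "\<omega> * \<phi> 0 > 0" using \<omega>_pos P.pos[of 0] by simp
  have T1: "T \<ge> 1" using I0 \<omega>\<phi> by (simp add: T_def)
  have TT: "\<omega> * \<phi> 0 * (T - 1) = I" using \<omega>_pos P.pos[of 0] by (simp add: T_def)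
  have "\<Phi> T \<ge> I" using \<Phi>low[OF T1] TT by linarith
  moreover have "\<Phi> 0 \<le> I" using I0 by (simp add: \<Phi>_def)
  moreover have "continuous_on {0..T} \<Phi>"
    unfolding \<Phi>g by (intro continuous_intros indefinite_integral_continuous_1 g0int)
  ultimately obtain t0 where t0: "0 \<le> t0" "t0 \<le> T" "\<Phi> t0 = I"
    using IVT'[of \<Phi> 0 I T] T1 by auto
  define R0 where "R0 = t0 / (1 + sqrt (1 + t0^2))"
  have R0: "0 \<le> R0" "R0 < 1" "Lf R0 = t0" using Lf_inv[OF t0(1)] by (simp_all add: R0_def)
  define B where "B = ball (0::'a) R0"
  have BG: "(LINT x:B|lborel. Gd x) = I" using ballG[OF R0(1,2)] R0 t0 by (simp add: B_def)
  have BF: "(LINT x:B|lborel. Fd x) = \<eta> I" using eqball[OF R0(1,2)] BG by (simp add: B_def)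

  (* bathtub *)
  define c where "c = t0 * P.gq t0"
  define h where "h = (\<lambda>x. Fd x - c * Gd x)"
  have Fd_eq: "Fd x = hlam x * P.gq (hlam x) * Gd x" for x
    by (simp add: Fd_def Gd_def P.dphi_eq mult_ac)
  have h_eq: "h x = (hlam x * P.gq (hlam x) - c) * Gd x" for x
    by (simp add: h_def Fd_eq algebra_simps)
  have fq_mono: "s * P.gq s \<le> s' * P.gq s'" if "0 \<le> s" "s \<le> s'" for s s'
    by (rule mult_mono) (use that P.gq_mono P.gq_nonneg in auto)
  define b2 where "b2 = max b R0"
  have b2: "b2 < 1" using b1 R0 by (simp add: b2_def)
  have sub2: "\<Omega> \<union> B \<subseteq> cball 0 b2" using \<Omega>cb by (auto simp: B_def b2_def)
  have inth: "set_integrable lborel S h" if "S \<in> sets lborel" "S \<subseteq> \<Omega> \<union> B" for S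
  proof -
    have S: "S \<subseteq> cball 0 b2" using that sub2 by auto
    show ?thesis unfolding h_def
      by (rule set_integral_diff(1)[OF intF[OF that(1) S b2]]) (use intG[OF that(1) S b2] in auto)
  qed
  have hint: "(LINT x:S|lborel. h x) = (LINT x:S|lborel. Fd x) - c * (LINT x:S|lborel. Gd x)"
    if "S \<in> sets lborel" "S \<subseteq> \<Omega> \<union> B" for S
  proof -
    have S: "S \<subseteq> cball 0 b2" using that sub2 by auto
    show ?thesis unfolding h_def
      using set_integral_diff(2)[OF intF[OF that(1) S b2] set_integrable_mult_right[OF intG[OF that(1) S b2]]]
      by simp
  qed
  have Bsets: "B \<in> sets lborel" by (simp add: B_def)
  have sets3: "\<Omega> \<inter> B \<in> sets lborel" "\<Omega> - B \<in> sets lborel" "B - \<Omega> \<in> sets lborel"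
    using \<Omega>sets Bsets by auto
  have hnn: "0 \<le> h x" if "x \<in> \<Omega> - B" for x
  proof -
    have x1: "norm x < 1" "R0 \<le> norm x" using that \<Omega>sub by (auto simp: B_def)
    have "t0 \<le> hlam x" using Lf_mono[OF R0(1) x1(2) x1(1)] R0(3) hlam_eq[OF x1(1)] by simp
    hence "c \<le> hlam x * P.gq (hlam x)" unfolding c_def by (rule fq_mono[OF t0(1)])
    thus ?thesis using Gpos[OF x1(1)] by (simp add: h_eq)
  qed
  have hnp: "h x \<le> 0" if "x \<in> B - \<Omega>" for x
  proof -
    have x1: "norm x < R0" using that by (auto simp: B_def)
    hence x2: "norm x < 1" using R0 by simp
    have "hlam x \<le> t0" using Lf_mono[OF _ less_imp_le[OF x1] R0(2)] R0(3) hlam_eq[OF x2] by simp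
    hence "hlam x * P.gq (hlam x) \<le> c" unfolding c_def using pos_facts(1)[OF x2] by (intro fq_mono)
    thus ?thesis using Gpos[OF x2] by (simp add: h_eq mult_le_0_iff)
  qed
  have s1: "(LINT x:\<Omega>|lborel. h x) = (LINT x:\<Omega> \<inter> B|lborel. h x) + (LINT x:\<Omega> - B|lborel. h x)"
  proof -
    have "\<Omega> = (\<Omega> \<inter> B) \<union> (\<Omega> - B)" by auto
    hence "(LINT x:\<Omega>|lborel. h x) = (LINT x:(\<Omega> \<inter> B) \<union> (\<Omega> - B)|lborel. h x)" by simp
    also have "\<dots> = (LINT x:\<Omega> \<inter> B|lborel. h x) + (LINT x:\<Omega> - B|lborel. h x)"
      by (rule set_integral_Un) (auto intro!: inth sets3)
    finally show ?thesis .
  qed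
  have s2: "(LINT x:B|lborel. h x) = (LINT x:\<Omega> \<inter> B|lborel. h x) + (LINT x:B - \<Omega>|lborel. h x)"
  proof -
    have "B = (\<Omega> \<inter> B) \<union> (B - \<Omega>)" by auto
    hence "(LINT x:B|lborel. h x) = (LINT x:(\<Omega> \<inter> B) \<union> (B - \<Omega>)|lborel. h x)" by simp
    also have "\<dots> = (LINT x:\<Omega> \<inter> B|lborel. h x) + (LINT x:B - \<Omega>|lborel. h x)"
      by (rule set_integral_Un) (auto intro!: inth sets3)
    finally show ?thesis .
  qed
  have ih1: "set_integrable lborel (\<Omega> - B) h" by (rule inth[OF sets3(2)]) auto
  have ih2: "set_integrable lborel (B - \<Omega>) h" by (rule inth[OF sets3(3)]) auto
  have z0: "set_integrable lborel S (\<lambda>x. 0::real)" for S :: "'a set" by (simp add: set_integrable_def)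
  have p1: "(LINT x:\<Omega> - B|lborel. h x) \<ge> 0"
  proof -
    have "(LINT x:\<Omega> - B|lborel. (0::real)) \<le> (LINT x:\<Omega> - B|lborel. h x)"
      by (rule set_integral_mono[OF z0 ih1]) (rule hnn)
    thus ?thesis by (simp add: set_lebesgue_integral_def)
  qed
  have p2: "(LINT x:B - \<Omega>|lborel. h x) \<le> 0"
  proof -
    have "(LINT x:B - \<Omega>|lborel. h x) \<le> (LINT x:B - \<Omega>|lborel. (0::real))"
      by (rule set_integral_mono[OF ih2 z0]) (rule hnp)
    thus ?thesis by (simp add: set_lebesgue_integral_def)
  qed
  have key: "(LINT x:\<Omega>|lborel. Fd x) - \<eta> I = (LINT x:\<Omega> - B|lborel. h x) - (LINT x:B - \<Omega>|lborel. h x)"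
    using s1 s2 hint[OF \<Omega>sets] hint[OF Bsets] BF BG by (simp add: I_def)
  have ineq: "(LINT x:\<Omega>|lborel. Fd x) \<ge> \<eta> I" using key p1 p2 by linarith

  show ?thesis
  proof (intro conjI impI)
    show "hyp_integral \<Omega> (\<lambda>x. deriv \<phi> (hlam x) * hlam' x * hlam x) \<ge> \<eta> (hyp_integral \<Omega> (\<lambda>x. \<phi> (hlam x) * hlam' x))"
      using ineq by (simp add: hF hG I_def)
    assume nc: "\<not> (\<exists>c. \<forall>x\<in>\<Omega>. \<phi> (hlam x) = c)"
    show "hyp_integral \<Omega> (\<lambda>x. deriv \<phi> (hlam x) * hlam' x * hlam x) = \<eta> (hyp_integral \<Omega> (\<lambda>x. \<phi> (hlam x) * hlam' x))
          \<longleftrightarrow> (\<exists>\<rho>>0. \<Omega> = hyp_ball0 \<rho>)"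
    proof
      assume "hyp_integral \<Omega> (\<lambda>x. deriv \<phi> (hlam x) * hlam' x * hlam x) = \<eta> (hyp_integral \<Omega> (\<lambda>x. \<phi> (hlam x) * hlam' x))"
      hence eq: "(LINT x:\<Omega>|lborel. Fd x) = \<eta> I" by (simp add: hF hG I_def)
      have D1: "(LINT x:\<Omega> - B|lborel. h x) = 0" and D2: "(LINT x:B - \<Omega>|lborel. h x) = 0"
        using key eq p1 p2 by linarith+
      show "\<exists>\<rho>>0. \<Omega> = hyp_ball0 \<rho>"
      proof (cases "P.gq t0 > 0")
        case True
        have U1: "\<Omega> - cball 0 R0 = {}"
        proof (rule zero_integral_open[OF ih1 sets3(2) hnn D1])
          show "open (\<Omega> - cball 0 R0)" using \<Omega>open by auto
          show "\<Omega> - cball 0 R0 \<subseteq> \<Omega> - B" by (auto simp: B_def)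
          fix x assume x: "x \<in> \<Omega> - cball 0 R0"
          have x1: "norm x < 1" "R0 < norm x" using x \<Omega>sub by auto
          have lt: "t0 < hlam x" using Lf_strict_mono[OF R0(1) x1(2) x1(1)] R0(3) hlam_eq[OF x1(1)] by simp
          have "c < hlam x * P.gq t0" unfolding c_def using lt True by (simp add: mult_strict_right_mono)
          also have "\<dots> \<le> hlam x * P.gq (hlam x)"
            using P.gq_mono[of t0 "hlam x"] lt t0(1) by (intro mult_left_mono) auto
          finally show "0 < h x" using Gpos[OF x1(1)] by (simp add: h_eq)
        qed
        have ih2': "set_integrable lborel (B - \<Omega>) (\<lambda>x. -1 * h x)"
          by (rule set_integrable_mult_right) (use ih2 in auto)
        have D2': "(LINT x:B - \<Omega>|lborel. -1 * h x) = 0" by (simp only: set_integral_mult_right D2 mult_zero_right)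
        have U2: "B - closure \<Omega> = {}"
        proof (rule zero_integral_open[OF ih2' sets3(3) _ D2'])
          show "open (B - closure \<Omega>)" by (auto simp: B_def)
          show "B - closure \<Omega> \<subseteq> B - \<Omega>" using closure_subset by auto
          show "0 \<le> -1 * h x" if "x \<in> B - \<Omega>" for x using hnp[OF that] by simp
          fix x assume x: "x \<in> B - closure \<Omega>"
          have x1: "norm x < R0" using x by (auto simp: B_def)
          hence x2: "norm x < 1" using R0 by simp
          have lt: "hlam x < t0" using Lf_strict_mono[OF _ x1 R0(2)] R0(3) hlam_eq[OF x2] by simp
          have hl0: "0 \<le> hlam x" by (rule pos_facts(1)[OF x2])
          have "hlam x * P.gq (hlam x) \<le> hlam x * P.gq t0"
            using P.gq_mono[of "hlam x" t0] lt hl0 by (intro mult_left_mono) auto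
          also have "\<dots> < c" unfolding c_def using lt True by (simp add: mult_strict_right_mono)
          finally have "hlam x * P.gq (hlam x) - c < 0" by simp
          thus "0 < -1 * h x" using Gpos[OF x2] by (simp add: h_eq mult_less_0_iff)
        qed
        have "\<Omega> \<subseteq> interior (cball 0 R0)" by (rule interior_maximal) (use U1 \<Omega>open in auto)
        hence o1: "\<Omega> \<subseteq> B" by (simp add: B_def)
        have "B \<subseteq> interior (closure \<Omega>)" by (rule interior_maximal) (use U2 in \<open>auto simp: B_def\<close>)
        hence o2: "B \<subseteq> \<Omega>" using \<Omega>reg by simp
        have \<Omega>B: "\<Omega> = ball 0 R0" using o1 o2 by (simp add: B_def)
        have R0p: "R0 > 0"
        proof (rule ccontr)
          assume "\<not> R0 > 0"
          hence "ball (0::'a) R0 = {}" by auto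
          thus False using \<Omega>B \<Omega>ne by simp
        qed
        define \<rho> where "\<rho> = ln ((1+R0)/(1-R0))"
        have "\<rho> > 0" unfolding \<rho>_def by (rule ln_pos_R[OF R0p R0(2)])
        moreover have "\<Omega> = hyp_ball0 \<rho>"
          unfolding hyp_ball0_eq \<rho>_def Rf_inv[OF R0(1,2)] by (rule \<Omega>B)
        ultimately show ?thesis by blast
      next
        case False
        hence g0t: "P.gq t0 = 0" using P.gq_nonneg[OF t0(1)] by simp
        hence c0: "c = 0" by (simp add: c_def)
        define U where "U = (\<Omega> - cball 0 R0) \<inter> (\<lambda>x. P.gq (hlam x)) -` {0<..}"
        have Uopen: "open U" unfolding U_def
        proof (rule continuous_open_preimage)
          show "continuous_on (\<Omega> - cball 0 R0) (\<lambda>x. P.gq (hlam x))"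
          proof (rule continuous_on_subset)
            show "continuous_on (ball 0 1) (\<lambda>x::'a. P.gq (hlam x))"
              by (rule continuous_on_compose2[OF P.gq_cont hlam_cont]) auto
          qed (use \<Omega>sub in auto)
        qed (use \<Omega>open in auto)
        have "U = {}"
        proof (rule zero_integral_open[OF ih1 sets3(2) hnn D1 Uopen])
          show "U \<subseteq> \<Omega> - B" by (auto simp: U_def B_def)
          fix x assume x: "x \<in> U"
          have x1: "norm x < 1" "R0 < norm x" using x \<Omega>sub by (auto simp: U_def)
          have lt: "t0 < hlam x" using Lf_strict_mono[OF R0(1) x1(2) x1(1)] R0(3) hlam_eq[OF x1(1)] by simp
          have gp: "P.gq (hlam x) > 0" using x by (auto simp: U_def)
          have "0 < hlam x * P.gq (hlam x)" using lt t0(1) gp by simp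
          thus "0 < h x" using Gpos[OF x1(1)] by (simp add: h_eq c0)
        qed
        have zero: "P.gq (hlam x) = 0" if x: "x \<in> \<Omega>" for x
        proof -
          have x1: "norm x < 1" using x \<Omega>sub by auto
          have nn: "0 \<le> P.gq (hlam x)" by (rule P.gq_nonneg[OF pos_facts(1)[OF x1]])
          show ?thesis
          proof (cases "norm x \<le> R0")
            case True
            have "hlam x \<le> t0" using Lf_mono[OF _ True R0(2)] R0(3) hlam_eq[OF x1] by simp
            thus ?thesis using P.gq_mono[of "hlam x" t0] g0t nn by simp
          next
            case False
            hence "x \<notin> U \<Longrightarrow> \<not> P.gq (hlam x) > 0" using x by (auto simp: U_def)
            thus ?thesis using \<open>U = {}\<close> nn by simp
          qed
        qed
        have "\<forall>x\<in>\<Omega>. \<phi> (hlam x) = \<phi> 0"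
          using P.phi_const zero pos_facts(1) \<Omega>sub by (auto simp: subset_iff)
        with nc show ?thesis by blast
      qed
    next
      assume "\<exists>\<rho>>0. \<Omega> = hyp_ball0 \<rho>"
      then obtain \<rho> where \<rho>: "\<rho> > 0" "\<Omega> = hyp_ball0 \<rho>" by blast
      have \<Omega>b: "\<Omega> = ball 0 (Rf \<rho>)" using \<rho> by (simp add: hyp_ball0_eq)
      have "(LINT x:\<Omega>|lborel. Fd x) = \<eta> (LINT x:\<Omega>|lborel. Gd x)"
        unfolding \<Omega>b by (rule eqball) (use Rf_pos[OF \<rho>(1)] Rf_lt1[of \<rho>] in auto)
      thus "hyp_integral \<Omega> (\<lambda>x. deriv \<phi> (hlam x) * hlam' x * hlam x) = \<eta> (hyp_integral \<Omega> (\<lambda>x. \<phi> (hlam x) * hlam' x))"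
        by (simp add: hF hG)
    qed
  qed
qed

end
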